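(* Let $K$ be a commutative ring of characteristic $0$ with unit and $M$ a multiplicative $\mathbb{R}$-vector subspace of $\mathcal{H}^{>0}$. Let $F=G(m_0,\dots,m_k)$ be an $M$-generalized power series over $K$ with generating monomials $m_0,\dots,m_k$, and assume that the $m_i$ are pairwise comparable. Then $F$ has $\langle m_0,\dots,m_k\rangle^\times$-natural support, i.e. for every $p\in\langle m_0,\dots,m_k\rangle^\times$ the set $\operatorname{supp}(F)\cap(p,+\infty)$ is finite.
   Context: $\mathcal{H}$ is the Hardy field of germs at $+\infty$ of unary functions definable in $\mathbb{R}_{\mathrm{an},\exp}$, totally ordered by eventual comparison. $\langle m_0,\dots,m_k\rangle^\times$ is the multiplicative $\mathbb{R}$-vector space generated by $m_0,\dots,m_k$, i.e. $\{m_0^{r_0}\cdots m_k^{r_k}:r_i\in\mathbb{R}\}$. Germs $f,g$ are comparable if there are $r,s>0$ with $|f|^r<|g|<|f|^s$ eventually. An $M$-generalized power series over $K$ with generating monomials $m_0,\dots,m_k$ is a series $G(m_0,\dots,m_k)=\sum_{n\in M}\big(\sum_{\alpha\in\operatorname{supp}G,\,m^\alpha=n}a_\alpha\big)n$ in the ring $K((M))$ of formal series with anti-well-ordered support, where $m_0,\dots,m_k\in M$ are small (tend to $0$) and $G=\sum_\alpha a_\alpha X^\alpha$ is a generalized power series over $K$ in $X_0,\dots,X_k$ (support in a product of well-ordered subsets of $[0,\infty)$) with natural support (for each $a>0$ and each $i$, $[0,a)\cap\Pi_i(\operatorname{supp}G)$ is finite). $\operatorname{supp}(F)$ is the set of $n\in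 M$ with nonzero coefficient. *)

theory Defs
  imports Complex_Main
begin

(* Germs at +infinity are represented by functions real => real; two functions
   represent the same germ iff they agree eventually (filter at_top). *)

definition germ_of :: "(real \<Rightarrow> real) \<Rightarrow> (real \<Rightarrow> real) set" where
  "germ_of f = {g. \<forall>\<^sub>F x in at_top. g x = f x}"

(* Hardy field (of germs at +infinity), given by the set of all its representatives *)
definition hardy_field :: "(real \<Rightarrow> real) set \<Rightarrow> bool" where
  "hardy_field H \<longleftrightarrow>
     (\<forall>c. (\<lambda>_. c) \<in> H) \<and>
     (\<forall>f\<in>H. \<forall>g\<in>H. (\<lambda>x. f x + g x) \<in> H \<and> (\<lambda>x. f x * g x) \<in> H) \<and>
     (\<forall>f\<in>H. (\<lambda>x. - f x) \<in> H) \<and>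
     (\<forall>f\<in>H. \<not> (\<forall>\<^sub>F x in at_top. f x = 0) \<longrightarrow> (\<exists>g\<in>H. \<forall>\<^sub>F x in at_top. f x * g x = 1)) \<and>
     (\<forall>f\<in>H. \<exists>g\<in>H. \<forall>\<^sub>F x in at_top. (f has_real_derivative g x) (at x))"

definition mult_R_subspace_pos :: "(real \<Rightarrow> real) set \<Rightarrow> (real \<Rightarrow> real) set \<Rightarrow> bool" where
  "mult_R_subspace_pos H M \<longleftrightarrow>
     M \<subseteq> H \<and> (\<forall>f\<in>M. \<forall>\<^sub>F x in at_top. f x > 0) \<and>
     (\<lambda>_. 1) \<in> M \<and>
     (\<forall>f\<in>M. \<forall>g\<in>M. (\<lambda>x. f x * g x) \<in> M) \<and>
     (\<forall>f\<in>M. \<forall>r::real. (\<lambda>x. f x powr r) \<in> M)"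

definition germ_less :: "(real \<Rightarrow> real) \<Rightarrow> (real \<Rightarrow> real) \<Rightarrow> bool" where
  "germ_less f g \<longleftrightarrow> (\<forall>\<^sub>F x in at_top. f x < g x)"

definition comparable :: "(real \<Rightarrow> real) \<Rightarrow> (real \<Rightarrow> real) \<Rightarrow> bool" where
  "comparable f g \<longleftrightarrow> (\<exists>r s. r > 0 \<and> s > 0 \<and>
      (\<forall>\<^sub>F x in at_top. \<bar>f x\<bar> powr r < \<bar>g x\<bar> \<and> \<bar>g x\<bar> < \<bar>f x\<bar> powr s))"

definition monom :: "nat \<Rightarrow> (nat \<Rightarrow> real \<Rightarrow> real) \<Rightarrow> (nat \<Rightarrow> real) \<Rightarrow> real \<Rightarrow> real" where
  "monom k m \<alpha> = (\<lambda>x. \<Prod>i\<le>k. m i x powr \<alpha> i)"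

definition mult_span :: "nat \<Rightarrow> (nat \<Rightarrow> real \<Rightarrow> real) \<Rightarrow> (real \<Rightarrow> real) set" where
  "mult_span k m = {p. \<exists>r. \<forall>\<^sub>F x in at_top. p x = monom k m r x}"

(* generalized power series over K in X_0..X_k: a coefficient function on exponent
   vectors alpha : nat => real (coordinates > k are 0) *)
definition gps_supp :: "((nat \<Rightarrow> real) \<Rightarrow> 'K::zero) \<Rightarrow> (nat \<Rightarrow> real) set" where
  "gps_supp a = {\<alpha>. a \<alpha> \<noteq> 0}"

definition well_ordered_real :: "real set \<Rightarrow> bool" where
  "well_ordered_real W \<longleftrightarrow> (\<forall>S. S \<subseteq> W \<and> S \<noteq> {} \<longrightarrow> (\<exists>s\<in>S. \<forall>t\<in>S. s \<le> t))"

definition generalized_power_series :: "nat \<Rightarrow> ((nat \<Rightarrow> real) \<Rightarrow> 'K::zero) \<Rightarrow> bool" where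
  "generalized_power_series k a \<longleftrightarrow>
     (\<forall>\<alpha>\<in>gps_supp a. \<forall>i>k. \<alpha> i = 0) \<and>
     (\<exists>W. (\<forall>i\<le>k. W i \<subseteq> {0..} \<and> well_ordered_real (W i)) \<and>
          (\<forall>\<alpha>\<in>gps_supp a. \<forall>i\<le>k. \<alpha> i \<in> W i))"

definition natural_support :: "nat \<Rightarrow> ((nat \<Rightarrow> real) \<Rightarrow> 'K::zero) \<Rightarrow> bool" where
  "natural_support k a \<longleftrightarrow>
     (\<forall>b::real. b > 0 \<longrightarrow> (\<forall>i\<le>k. finite ({0..<b} \<inter> (\<lambda>\<alpha>. \<alpha> i) ` gps_supp a)))"

(* coefficient of the monomial n in the M-generalized power series G(m_0,...,m_k) *)
definition Mgps_coeff :: "nat \<Rightarrow> ((nat \<Rightarrow> real) \<Rightarrow> 'K::comm_ring_1) \<Rightarrow> (nat \<Rightarrow> real \<Rightarrow> real)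
     \<Rightarrow> (real \<Rightarrow> real) \<Rightarrow> 'K" where
  "Mgps_coeff k a m n =
     (\<Sum>\<alpha>\<in>{\<alpha>\<in>gps_supp a. \<forall>\<^sub>F x in at_top. monom k m \<alpha> x = n x}. a \<alpha>)"

definition Mgps_supp :: "(real \<Rightarrow> real) set \<Rightarrow> nat \<Rightarrow> ((nat \<Rightarrow> real) \<Rightarrow> 'K::comm_ring_1)
     \<Rightarrow> (nat \<Rightarrow> real \<Rightarrow> real) \<Rightarrow> (real \<Rightarrow> real) set set" where
  "Mgps_supp M k a m = germ_of ` {n\<in>M. Mgps_coeff k a m n \<noteq> 0}"

end

theory Submission
  imports Defs "HOL-Library.FuncSet"
begin

lemma germ_of_cong:
  assumes "\<forall>\<^sub>F x in at_top. f x = g x"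
  shows "germ_of f = germ_of g"
  unfolding germ_of_def
proof (intro Collect_cong iffI)
  fix h assume "\<forall>\<^sub>F x in at_top. h x = f x"
  with assms show "\<forall>\<^sub>F x in at_top. h x = g x" by eventually_elim simp
next
  fix h assume "\<forall>\<^sub>F x in at_top. h x = g x"
  with assms show "\<forall>\<^sub>F x in at_top. h x = f x" by eventually_elim simp
qed

lemma ev_ex: "eventually P (at_top::real filter) \<Longrightarrow> \<exists>x. P x"
  by (metis eventually_at_top_linorder order_refl)

lemma bounds_exist:
  fixes k i :: nat and m :: "nat \<Rightarrow> real \<Rightarrow> real"
  assumes pos: "\<forall>i\<le>k. \<forall>\<^sub>F x in at_top. 0 < m i x \<and> m i x < 1"
    and cmp: "\<forall>i\<le>k. \<forall>j\<le>k. i \<noteq> j \<longrightarrow> comparable (m i) (m j)"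
    and ik: "i \<le> k"
  shows "\<exists>c C. c > 0 \<and> C > 0 \<and> (\<forall>\<^sub>F x in at_top.
            c * (- ln (m 0 x)) \<le> - ln (m i x) \<and> - ln (m i x) \<le> C * (- ln (m 0 x)))"
proof (cases "i = 0")
  case True
  then show ?thesis by (intro exI[of _ 1]) auto
next
  case False
  then have "comparable (m 0) (m i)" using cmp[rule_format, of 0 i] ik by simp
  then obtain r s where rs: "r > 0" "s > 0"
    "\<forall>\<^sub>F x in at_top. \<bar>m 0 x\<bar> powr r < \<bar>m i x\<bar> \<and> \<bar>m i x\<bar> < \<bar>m 0 x\<bar> powr s"
    unfolding comparable_def by blast
  have "\<forall>\<^sub>F x in at_top. s * (- ln (m 0 x)) \<le> - ln (m i x) \<and> - ln (m i x) \<le> r * (- ln (m 0 x))"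
    using rs(3) pos[rule_format, OF le0] pos[rule_format, OF ik]
  proof eventually_elim
    case (elim x)
    then have a: "m 0 x powr r < m i x" "m i x < m 0 x powr s" by auto
    have "ln (m 0 x powr r) < ln (m i x)" using a elim by (subst ln_less_cancel_iff) auto
    moreover have "ln (m i x) < ln (m 0 x powr s)" using a elim by (subst ln_less_cancel_iff) auto
    ultimately show ?case using elim by (auto simp: ln_powr)
  qed
  then show ?thesis using rs by blast
qed

theorem lemma5p4:
  fixes H M :: "(real \<Rightarrow> real) set"
    and k :: nat
    and m :: "nat \<Rightarrow> real \<Rightarrow> real"
    and a :: "(nat \<Rightarrow> real) \<Rightarrow> 'K::{comm_ring_1, ring_char_0}"
  assumes "hardy_field H"
    and "mult_R_subspace_pos H M"
    and "\<forall>i\<le>k. m i \<in> M \<and> (m i \<longlongrightarrow> 0) at_top"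
    and "generalized_power_series k a"
    and "natural_support k a"
    and "\<forall>i\<le>k. \<forall>j\<le>k. i \<noteq> j \<longrightarrow> comparable (m i) (m j)"
  shows "\<forall>p\<in>mult_span k m.
           finite {g \<in> Mgps_supp M k a m. \<exists>n\<in>g. germ_less p n}"
proof
  fix p assume "p \<in> mult_span k m"
  then obtain r where pr: "\<forall>\<^sub>F x in at_top. p x = monom k m r x"
    unfolding mult_span_def by blast
  have pos: "\<forall>i\<le>k. \<forall>\<^sub>F x in at_top. 0 < m i x \<and> m i x < 1"
  proof (intro allI impI)
    fix i assume i: "i \<le> k"
    have "\<forall>\<^sub>F x in at_top. 0 < m i x" using assms(2,3) i unfolding mult_R_subspace_pos_def by blast
    moreover have "\<forall>\<^sub>F x in at_top. m i x < 1"
      using assms(3) i by (intro order_tendstoD(2)[of "m i" 0]) auto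
    ultimately show "\<forall>\<^sub>F x in at_top. 0 < m i x \<and> m i x < 1" by eventually_elim auto
  qed
  have "\<forall>i. \<exists>cC. i \<le> k \<longrightarrow> fst cC > 0 \<and> snd cC > 0 \<and> (\<forall>\<^sub>F x in at_top.
            fst cC * (- ln (m 0 x)) \<le> - ln (m i x) \<and> - ln (m i x) \<le> snd cC * (- ln (m 0 x)))"
  proof
    fix i
    show "\<exists>cC. i \<le> k \<longrightarrow> fst cC > 0 \<and> snd cC > 0 \<and> (\<forall>\<^sub>F x in at_top.
            fst cC * (- ln (m 0 x)) \<le> - ln (m i x) \<and> - ln (m i x) \<le> snd cC * (- ln (m 0 x)))"
    proof (cases "i \<le> k")
      case True
      from bounds_exist[OF pos assms(6) True] obtain c0 C0 where
        "c0 > 0 \<and> C0 > 0 \<and> (\<forall>\<^sub>F x in at_top.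
            c0 * (- ln (m 0 x)) \<le> - ln (m i x) \<and> - ln (m i x) \<le> C0 * (- ln (m 0 x)))" by blast
      then show ?thesis by (intro exI[of _ "(c0, C0)"]) simp
    qed simp
  qed
  then obtain f where f: "\<forall>i. i \<le> k \<longrightarrow> fst (f i) > 0 \<and> snd (f i) > 0 \<and> (\<forall>\<^sub>F x in at_top.
            fst (f i) * (- ln (m 0 x)) \<le> - ln (m i x) \<and> - ln (m i x) \<le> snd (f i) * (- ln (m 0 x)))"
    using choice[of "\<lambda>i cC. i \<le> k \<longrightarrow> fst cC > 0 \<and> snd cC > 0 \<and> (\<forall>\<^sub>F x in at_top.
            fst cC * (- ln (m 0 x)) \<le> - ln (m i x) \<and> - ln (m i x) \<le> snd cC * (- ln (m 0 x)))"] by blast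
  define c where "c i = fst (f i)" for i
  define C where "C i = snd (f i)" for i
  have cC: "\<And>i. i \<le> k \<Longrightarrow> c i > 0 \<and> C i > 0 \<and> (\<forall>\<^sub>F x in at_top.
            c i * (- ln (m 0 x)) \<le> - ln (m i x) \<and> - ln (m i x) \<le> C i * (- ln (m 0 x)))"
    using f unfolding c_def C_def by blast
  define R where "R = (\<Sum>i\<le>k. \<bar>r i\<bar> * C i)"
  have ev_all: "\<forall>\<^sub>F x in at_top. \<forall>i\<in>{..k}. 0 < m i x \<and> m i x < 1 \<and>
      c i * (- ln (m 0 x)) \<le> - ln (m i x) \<and> - ln (m i x) \<le> C i * (- ln (m 0 x))"
  proof (rule eventually_ball_finite)
    show "finite {..k}" by simp
    show "\<forall>i\<in>{..k}. \<forall>\<^sub>F x in at_top. 0 < m i x \<and> m i x < 1 \<and>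
      c i * (- ln (m 0 x)) \<le> - ln (m i x) \<and> - ln (m i x) \<le> C i * (- ln (m 0 x))"
    proof
      fix i assume "i \<in> {..k}"
      then have i: "i \<le> k" by simp
      show "\<forall>\<^sub>F x in at_top. 0 < m i x \<and> m i x < 1 \<and>
      c i * (- ln (m 0 x)) \<le> - ln (m i x) \<and> - ln (m i x) \<le> C i * (- ln (m 0 x))"
        using eventually_conj[OF pos[rule_format, OF i] conjunct2[OF conjunct2[OF cC[OF i]]]]
        by (simp add: conj_assoc)
    qed
  qed
  have nonneg: "\<And>\<alpha> i. \<alpha> \<in> gps_supp a \<Longrightarrow> i \<le> k \<Longrightarrow> 0 \<le> \<alpha> i"
    using assms(4) unfolding generalized_power_series_def by fastforce
  have zero: "\<And>\<alpha> i. \<alpha> \<in> gps_supp a \<Longrightarrow> i > k \<Longrightarrow> \<alpha> i = 0"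
    using assms(4) unfolding generalized_power_series_def by fastforce
  define A where "A = {\<alpha> \<in> gps_supp a. \<forall>\<^sub>F x in at_top. p x < monom k m \<alpha> x}"
  have bound: "\<alpha> j < R / c j" if "\<alpha> \<in> A" "j \<le> k" for \<alpha> j
  proof -
    have \<alpha>: "\<alpha> \<in> gps_supp a" and ev: "\<forall>\<^sub>F x in at_top. p x < monom k m \<alpha> x"
      using that(1) unfolding A_def by auto
    obtain x where x: "\<forall>i\<in>{..k}. 0 < m i x \<and> m i x < 1 \<and>
      c i * (- ln (m 0 x)) \<le> - ln (m i x) \<and> - ln (m i x) \<le> C i * (- ln (m 0 x))"
      "p x = monom k m r x" "p x < monom k m \<alpha> x"
      using ev_ex[OF eventually_conj[OF ev_all eventually_conj[OF pr ev]]] by blast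
    define L where "L = - ln (m 0 x)"
    have xa: "0 < m i x" "m i x < 1" "c i * L \<le> - ln (m i x)" "- ln (m i x) \<le> C i * L"
      if "i \<le> k" for i
      using x(1) that unfolding L_def by auto
    have lnneg: "- ln (m i x) \<ge> 0" if "i \<le> k" for i
      using xa(1,2)[OF that] by simp
    have L: "L > 0" using xa(1,2)[of 0] unfolding L_def by simp
    have mpz: "\<And>i. i \<le> k \<Longrightarrow> m i x > 0" using x(1) by auto
    have lnmon: "ln (monom k m \<beta> x) = (\<Sum>i\<le>k. \<beta> i * ln (m i x))" for \<beta>
    proof -
      have "ln (\<Prod>i\<le>k. m i x powr \<beta> i) = (\<Sum>i\<le>k. ln (m i x powr \<beta> i))"
      proof (rule ln_prod)
        fix i assume "i \<in> {..k}"
        then have "m i x > 0" using mpz by simp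
        then show "m i x powr \<beta> i \<noteq> 0" by simp
      qed simp
      also have "\<dots> = (\<Sum>i\<le>k. \<beta> i * ln (m i x))"
      proof (rule sum.cong)
        fix i assume "i \<in> {..k}"
        then have "m i x > 0" using mpz by simp
        then show "ln (m i x powr \<beta> i) = \<beta> i * ln (m i x)" by (simp add: ln_powr)
      qed simp
      finally show ?thesis unfolding monom_def .
    qed
    have mpos: "monom k m \<beta> x > 0" for \<beta>
    proof -
      have "m i x powr \<beta> i > 0" if "i \<in> {..k}" for i
      proof -
        have "m i x > 0" using mpz that by simp
        then show ?thesis by simp
      qed
      then show ?thesis unfolding monom_def by (intro prod_pos) auto
    qed
    have "ln (monom k m r x) < ln (monom k m \<alpha> x)"
      using x(2,3) mpos by simp
    then have "(\<Sum>i\<le>k. \<alpha> i * (- ln (m i x))) < (\<Sum>i\<le>k. r i * (- ln (m i x)))"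
      unfolding lnmon by (simp add: sum_negf)
    also have "\<dots> \<le> (\<Sum>i\<le>k. \<bar>r i\<bar> * C i * L)"
    proof (rule sum_mono)
      fix i assume i: "i \<in> {..k}"
      have "r i * (- ln (m i x)) \<le> \<bar>r i\<bar> * (- ln (m i x))"
        using lnneg i by (intro mult_right_mono) auto
      also have "\<dots> \<le> \<bar>r i\<bar> * (C i * L)"
        using xa(4) i by (intro mult_left_mono) auto
      finally show "r i * (- ln (m i x)) \<le> \<bar>r i\<bar> * C i * L" by simp
    qed
    also have "\<dots> = R * L" unfolding R_def by (simp add: sum_distrib_right)
    finally have lt: "(\<Sum>i\<le>k. \<alpha> i * (- ln (m i x))) < R * L" .
    have "\<alpha> j * c j * L \<le> \<alpha> j * (- ln (m j x))"
      using mult_left_mono[OF xa(3)[OF that(2)] nonneg[OF \<alpha> that(2)]]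
      by (simp add: mult.assoc)
    also have "\<dots> \<le> (\<Sum>i\<le>k. \<alpha> i * (- ln (m i x)))"
    proof (rule member_le_sum)
      show "j \<in> {..k}" using that(2) by simp
      show "finite {..k}" by simp
      fix i assume "i \<in> {..k} - {j}"
      then have ik: "i \<le> k" by simp
      show "0 \<le> \<alpha> i * - ln (m i x)" using mult_nonneg_nonneg[OF nonneg[OF \<alpha> ik] lnneg[OF ik]] by simp
    qed
    finally have "\<alpha> j * c j * L < R * L" using lt by linarith
    then have "\<alpha> j * c j < R" using L by simp
    then show ?thesis using cC[OF that(2)] by (simp add: pos_less_divide_eq)
  qed
  define S where "S i = {0..<\<bar>R\<bar> / c i + 1} \<inter> (\<lambda>\<alpha>. \<alpha> i) ` gps_supp a" for i
  have finS: "finite (S i)" if "i \<le> k" for i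
  proof -
    have "\<bar>R\<bar> / c i + 1 > 0" using cC[OF that] by (simp add: add_nonneg_pos)
    then show ?thesis using assms(5) that unfolding natural_support_def S_def by blast
  qed
  define res where "res \<alpha> = (\<lambda>i. if i \<in> {..k} then \<alpha> i else undefined)" for \<alpha> :: "nat \<Rightarrow> real"
  have "inj_on res A"
  proof
    fix \<alpha> \<beta> assume "\<alpha> \<in> A" "\<beta> \<in> A" "res \<alpha> = res \<beta>"
    then have s: "\<alpha> \<in> gps_supp a" "\<beta> \<in> gps_supp a" "res \<alpha> = res \<beta>" unfolding A_def by auto
    show "\<alpha> = \<beta>"
    proof
      fix i
      show "\<alpha> i = \<beta> i"
      proof (cases "i \<le> k")
        case True
        then show ?thesis using fun_cong[OF s(3), of i] unfolding res_def by simp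
      next
        case False
        then show ?thesis using zero[OF s(1)] zero[OF s(2)] by simp
      qed
    qed
  qed
  moreover have "res ` A \<subseteq> PiE {..k} S"
  proof
    fix y assume "y \<in> res ` A"
    then obtain \<alpha> where \<alpha>: "\<alpha> \<in> A" "y = res \<alpha>" by blast
    have "\<alpha> i \<in> S i" if "i \<le> k" for i
    proof -
      have "\<alpha> i < R / c i" using bound[OF \<alpha>(1) that] .
      also have "\<dots> \<le> \<bar>R\<bar> / c i" using cC[OF that] by (simp add: divide_right_mono)
      finally have "\<alpha> i < \<bar>R\<bar> / c i + 1" by simp
      moreover have "\<alpha> \<in> gps_supp a" using \<alpha>(1) unfolding A_def by auto
      ultimately show ?thesis unfolding S_def using nonneg that by auto
    qed
    then show "y \<in> PiE {..k} S" using \<alpha>(2) unfolding res_def by (auto simp: PiE_iff extensional_def)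
  qed
  then have "finite (res ` A)"
    by (rule finite_subset) (intro finite_PiE; simp add: finS)
  ultimately have finA: "finite A" using finite_imageD by blast
  have "{g \<in> Mgps_supp M k a m. \<exists>n\<in>g. germ_less p n} \<subseteq> (\<lambda>\<alpha>. germ_of (monom k m \<alpha>)) ` A"
  proof
    fix g assume g: "g \<in> {g \<in> Mgps_supp M k a m. \<exists>n\<in>g. germ_less p n}"
    then obtain n where n: "n \<in> M" "Mgps_coeff k a m n \<noteq> 0" "g = germ_of n"
      unfolding Mgps_supp_def by auto
    obtain n' where n': "n' \<in> g" "germ_less p n'" using g by auto
    have e1: "\<forall>\<^sub>F x in at_top. n' x = n x" using n'(1) n(3) unfolding germ_of_def by auto
    have "{\<alpha>\<in>gps_supp a. \<forall>\<^sub>F x in at_top. monom k m \<alpha> x = n x} \<noteq> {}"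
    proof
      assume h: "{\<alpha>\<in>gps_supp a. \<forall>\<^sub>F x in at_top. monom k m \<alpha> x = n x} = {}"
      have "Mgps_coeff k a m n = 0" unfolding Mgps_coeff_def h by simp
      then show False using n(2) by simp
    qed
    then obtain \<alpha> where \<alpha>: "\<alpha> \<in> gps_supp a" "\<forall>\<^sub>F x in at_top. monom k m \<alpha> x = n x" by blast
    have "\<forall>\<^sub>F x in at_top. p x < monom k m \<alpha> x"
      using n'(2) e1 \<alpha>(2) unfolding germ_less_def by eventually_elim simp
    then have "\<alpha> \<in> A" using \<alpha>(1) unfolding A_def by simp
    moreover have "g = germ_of (monom k m \<alpha>)"
      using n(3) germ_of_cong[OF \<alpha>(2)] by simp
    ultimately show "g \<in> (\<lambda>\<alpha>. germ_of (monom k m \<alpha>)) ` A" by blast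
  qed
  then show "finite {g \<in> Mgps_supp M k a m. \<exists>n\<in>g. germ_less p n}"
    using finA by (meson finite_imageI finite_subset)
qed

end
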